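(* Let $G$ be a Chevalley–Demazure group scheme with root system $\Phi\in\{E_6,E_7,E_8,F_4\}$ and $R$ a commutative integral domain with $R^*\neq\{1\}$. Let $\alpha,\beta\in\Phi$ be linearly independent. Then there is a torus witness for $(\alpha,\beta)$, except possibly when $R^*=\{\pm1\}$, $\Phi=F_4$, and $\alpha,\beta$ are orthogonal and both long.
   Context: $T$ is the distinguished maximal torus of $G$. A torus witness for $(\alpha,\beta)$ is an element $s\in T(R)$ that centralizes the root subgroup $U_\alpha$ and satisfies $\mathrm{C}_{U_\beta}(s)=1$. *)

theory Defs
  imports Complex_Main
begin

text \<open>Vectors of the ambient Euclidean space R^8 are modelled as functions
  nat => real supported on {0..<8} (coordinates e_0,...,e_7).
  The root systems E6, E7, E8, F4 are given in their standard (Bourbaki)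
  coordinates.\<close>

type_synonym vec = "nat \<Rightarrow> real"

definition ip :: "vec \<Rightarrow> vec \<Rightarrow> real" where
  "ip v w = (\<Sum>k<8. v k * w k)"

definition unitv :: "nat \<Rightarrow> vec" where
  "unitv i = (\<lambda>k. if k = i then 1 else 0)"

definition lin_indep2 :: "vec \<Rightarrow> vec \<Rightarrow> bool" where
  "lin_indep2 a b \<longleftrightarrow> (\<forall>c d :: real. (\<lambda>k. c * a k + d * b k) = (\<lambda>k. 0) \<longrightarrow> c = 0 \<and> d = 0)"

definition E8_roots :: "vec set" where
  "E8_roots =
     {v. \<exists>i j a b. i < j \<and> j < 8 \<and> a \<in> {-1, 1} \<and> b \<in> {-1, 1} \<and>
           v = (\<lambda>k. a * unitv i k + b * unitv j k)}
   \<union> {v. (\<forall>k<8. v k \<in> {1/2, -1/2}) \<and> (\<forall>k\<ge>8. v k = 0) \<and>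
           even (card {k. k < 8 \<and> v k < 0})}"

text \<open>E7 = roots of E8 orthogonal to e_6 + e_7 (Bourbaki's e7+e8);
  E6 = roots of E7 orthogonal moreover to e_5 + e_7 (Bourbaki's e6+e8).\<close>

definition E7_roots :: "vec set" where
  "E7_roots = {v \<in> E8_roots. ip v (\<lambda>k. unitv 6 k + unitv 7 k) = 0}"

definition E6_roots :: "vec set" where
  "E6_roots = {v \<in> E7_roots. ip v (\<lambda>k. unitv 5 k + unitv 7 k) = 0}"

definition F4_roots :: "vec set" where
  "F4_roots =
     {v. \<exists>i a. i < 4 \<and> a \<in> {-1, 1} \<and> v = (\<lambda>k. a * unitv i k)}
   \<union> {v. \<exists>i j a b. i < j \<and> j < 4 \<and> a \<in> {-1, 1} \<and> b \<in> {-1, 1} \<and>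
           v = (\<lambda>k. a * unitv i k + b * unitv j k)}
   \<union> {v. (\<forall>k<4. v k \<in> {1/2, -1/2}) \<and> (\<forall>k\<ge>4. v k = 0)}"

definition root_lattice :: "vec set \<Rightarrow> vec set" where
  "root_lattice \<Phi> = {v. \<exists>c :: vec \<Rightarrow> int. v = (\<lambda>k. \<Sum>r\<in>\<Phi>. of_int (c r) * r k)}"

definition real_span :: "vec set \<Rightarrow> vec set" where
  "real_span \<Phi> = {v. \<exists>c :: vec \<Rightarrow> real. v = (\<lambda>k. \<Sum>r\<in>\<Phi>. c r * r k)}"

definition weight_lattice :: "vec set \<Rightarrow> vec set" where
  "weight_lattice \<Phi> = {v \<in> real_span \<Phi>. \<forall>a\<in>\<Phi>. 2 * ip v a / ip a a \<in> \<int>}"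

text \<open>The character lattice of a Chevalley--Demazure group scheme with root
  system Phi: an additive subgroup Lambda with Q(Phi) <= Lambda <= P(Phi).
  It determines the isogeny type of G.\<close>

definition is_group_lattice :: "vec set \<Rightarrow> vec set \<Rightarrow> bool" where
  "is_group_lattice \<Phi> \<Lambda> \<longleftrightarrow>
     root_lattice \<Phi> \<subseteq> \<Lambda> \<and> \<Lambda> \<subseteq> weight_lattice \<Phi> \<and>
     (\<forall>x\<in>\<Lambda>. \<forall>y\<in>\<Lambda>. (\<lambda>k. x k + y k) \<in> \<Lambda>) \<and> (\<forall>x\<in>\<Lambda>. (\<lambda>k. - x k) \<in> \<Lambda>)"

text \<open>The maximal torus T(R) = Hom(Lambda, R^*): elements are group
  homomorphisms from Lambda to the unit group of R (values outside Lambda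
  are irrelevant).\<close>

definition torus :: "vec set \<Rightarrow> (vec \<Rightarrow> 'r::comm_ring_1) set" where
  "torus \<Lambda> = {s. (\<forall>x\<in>\<Lambda>. s x dvd 1) \<and>
                   (\<forall>x\<in>\<Lambda>. \<forall>y\<in>\<Lambda>. s (\<lambda>k. x k + y k) = s x * s y)}"

text \<open>Action of a torus element s on the root subgroup
  U_beta = { x_beta(t) : t in R }:  s x_beta(t) s^-1 = x_beta(beta(s) t),
  where beta(s) is the value of the character s at beta.\<close>

definition root_act :: "(vec \<Rightarrow> 'r::comm_ring_1) \<Rightarrow> vec \<Rightarrow> 'r \<Rightarrow> 'r" where
  "root_act s \<beta> t = s \<beta> * t"

definition centralizes_root :: "(vec \<Rightarrow> 'r::comm_ring_1) \<Rightarrow> vec \<Rightarrow> bool" where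
  "centralizes_root s \<alpha> \<longleftrightarrow> (\<forall>t. root_act s \<alpha> t = t)"

text \<open>C_{U_beta}(s) = 1, with x_beta(t) identified with t.\<close>
definition trivial_centralizer_in_root :: "(vec \<Rightarrow> 'r::comm_ring_1) \<Rightarrow> vec \<Rightarrow> bool" where
  "trivial_centralizer_in_root s \<beta> \<longleftrightarrow> {t. root_act s \<beta> t = t} = {0}"

definition torus_witness :: "vec set \<Rightarrow> (vec \<Rightarrow> 'r::comm_ring_1) \<Rightarrow> vec \<Rightarrow> vec \<Rightarrow> bool" where
  "torus_witness \<Lambda> s \<alpha> \<beta> \<longleftrightarrow>
     s \<in> torus \<Lambda> \<and> centralizes_root s \<alpha> \<and> trivial_centralizer_in_root s \<beta>"

end

theory Submission
  imports Defs
begin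


lemma pw_add:
  fixes u v :: "'r::comm_ring_1"
  assumes uv: "u * v = 1"
  shows "u ^ nat (m + n) * v ^ nat (- (m + n)) = (u ^ nat m * v ^ nat (- m)) * (u ^ nat n * v ^ nat (- n))"
proof -
  have key: "\<And>a b c d::nat. int a - int b = int c - int d \<Longrightarrow> u ^ a * v ^ b = u ^ c * v ^ d"
  proof -
    fix a b c d :: nat assume h: "int a - int b = int c - int d"
    hence e: "a + d = c + b" by linarith
    have "u ^ a * v ^ b = u ^ a * v ^ b * (u * v) ^ d" using uv by simp
    also have "\<dots> = u ^ (a + d) * v ^ (b + d)" by (simp add: power_add power_mult_distrib ac_simps)
    also have "\<dots> = u ^ (c + b) * v ^ (b + d)" using e by simp
    also have "\<dots> = u ^ c * v ^ d * (u * v) ^ b" by (simp add: power_add power_mult_distrib ac_simps)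
    also have "\<dots> = u ^ c * v ^ d" using uv by simp
    finally show "u ^ a * v ^ b = u ^ c * v ^ d" .
  qed
  have "u ^ nat m * v ^ nat (- m) * (u ^ nat n * v ^ nat (- n)) = u ^ (nat m + nat n) * v ^ (nat (-m) + nat (-n))"
    by (simp add: power_add ac_simps)
  moreover have "u ^ nat (m + n) * v ^ nat (- (m + n)) = u ^ (nat m + nat n) * v ^ (nat (-m) + nat (-n))"
    by (rule key) simp
  ultimately show ?thesis by simp
qed

lemma ip_add_left: "ip (\<lambda>k. x k + y k) g = ip x g + ip y g"
  unfolding ip_def by (simp add: distrib_right sum.distrib)

lemma final:
  fixes \<Phi> \<Lambda> :: "vec set" and \<alpha> \<beta> \<gamma> :: vec
  assumes L: "is_group_lattice \<Phi> \<Lambda>"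
    and u: "\<exists>u::'r::idom. u dvd 1 \<and> u \<noteq> 1"
    and g: "\<gamma> \<in> \<Phi>" "ip \<gamma> \<gamma> = 2" "ip \<alpha> \<gamma> = 0"
    and b: "ip \<beta> \<gamma> = 1 \<or> ip \<beta> \<gamma> = -1 \<or> (ip \<beta> \<gamma> = 2 \<and> {u::'r. u dvd 1} \<noteq> {1, -1})"
  shows "\<exists>s :: vec \<Rightarrow> 'r. torus_witness \<Lambda> s \<alpha> \<beta>"
proof -
  have int: "ip x \<gamma> \<in> \<int>" if "x \<in> \<Lambda>" for x
  proof -
    have "x \<in> weight_lattice \<Phi>" using L that unfolding is_group_lattice_def by auto
    hence "2 * ip x \<gamma> / ip \<gamma> \<gamma> \<in> \<int>" using g(1) unfolding weight_lattice_def by auto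
    thus ?thesis using g(2) by simp
  qed
  obtain u0 :: 'r where u0: "u0 dvd 1" "u0 \<noteq> 1"
    "ip \<beta> \<gamma> = 2 \<Longrightarrow> u0 * u0 \<noteq> 1"
  proof (cases "ip \<beta> \<gamma> = 2")
    case True
    with b have "{u::'r. u dvd 1} \<noteq> {1, -1}" by auto
    moreover have "{1, -1} \<subseteq> {u::'r. u dvd 1}" by auto
    ultimately obtain w :: 'r where w: "w dvd 1" "w \<noteq> 1" "w \<noteq> -1" by blast
    have "w * w \<noteq> 1"
    proof
      assume "w * w = 1"
      hence "(w - 1) * (w + 1) = 0" by (simp add: algebra_simps)
      hence "w - 1 = 0 \<or> w + 1 = 0" by simp
      thus False using w by (auto simp: eq_neg_iff_add_eq_0)
    qed
    thus ?thesis using that w by blast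
  next
    case False
    then show ?thesis using that u by blast
  qed
  from u0(1) obtain v0 where "1 = u0 * v0" by (erule dvdE)
  hence uv: "u0 * v0 = 1" by simp
  define f where "f x = \<lfloor>ip x \<gamma>\<rfloor>" for x
  define s where "s x = u0 ^ nat (f x) * v0 ^ nat (- f x)" for x
  have fi: "of_int (f x) = ip x \<gamma>" if xL: "x \<in> \<Lambda>" for x
  proof -
    obtain n where "ip x \<gamma> = of_int n" using int[OF xL] by (erule Ints_cases)
    thus ?thesis unfolding f_def by simp
  qed
  have T: "s \<in> torus \<Lambda>"
    unfolding torus_def
  proof (intro CollectI conjI ballI)
    fix x assume "x \<in> \<Lambda>"
    have "1 = v0 * u0" using uv by (simp add: mult.commute)
    hence "v0 dvd 1" by (rule dvdI)
    hence h1: "v0 ^ nat (- f x) dvd 1 ^ nat (- f x)" by (rule dvd_power_same)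
    have h2: "u0 ^ nat (f x) dvd 1 ^ nat (f x)" using u0(1) by (rule dvd_power_same)
    have "u0 ^ nat (f x) * v0 ^ nat (- f x) dvd 1 * 1" by (rule mult_dvd_mono) (use h1 h2 in simp_all)
    thus "s x dvd 1" unfolding s_def by simp
  next
    fix x y assume xy: "x \<in> \<Lambda>" "y \<in> \<Lambda>"
    have "(\<lambda>k. x k + y k) \<in> \<Lambda>" using L xy unfolding is_group_lattice_def by auto
    hence "f (\<lambda>k. x k + y k) = f x + f y"
    proof -
      have "f (\<lambda>k. x k + y k) = \<lfloor>of_int (f x) + of_int (f y) :: real\<rfloor>"
        unfolding f_def[of "\<lambda>k. x k + y k"] ip_add_left fi[OF xy(1)] fi[OF xy(2)] ..
      thus ?thesis by simp
    qed
    thus "s (\<lambda>k. x k + y k) = s x * s y" unfolding s_def using pw_add[OF uv] by simp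
  qed
  have C: "centralizes_root s \<alpha>"
  proof -
    have "s \<alpha> = 1" unfolding s_def f_def using g(3) by simp
    thus ?thesis unfolding centralizes_root_def root_act_def by simp
  qed
  have ne: "s \<beta> \<noteq> 1"
  proof -
    have "ip \<beta> \<gamma> = 1 \<or> ip \<beta> \<gamma> = -1 \<or> ip \<beta> \<gamma> = 2" using b by auto
    moreover have "v0 \<noteq> 1" using uv u0(2) by auto
    ultimately show ?thesis
    proof (elim disjE)
      assume "ip \<beta> \<gamma> = 1" thus ?thesis unfolding s_def f_def using u0 by simp
    next
      assume h: "ip \<beta> \<gamma> = -1"
      have "\<lfloor>- 1::real\<rfloor> = -1" using floor_of_int[of "-1", where 'a=real] by simp
      hence "nat (- \<lfloor>- 1::real\<rfloor>) = 1" by simp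
      thus ?thesis unfolding s_def f_def h using \<open>v0 \<noteq> 1\<close> by simp
    next
      assume h: "ip \<beta> \<gamma> = 2"
      have "nat \<lfloor>2::real\<rfloor> = 2" by simp
      thus ?thesis unfolding s_def f_def h using u0(3)[OF h] by (simp add: power2_eq_square)
    qed
  qed
  have triv: "trivial_centralizer_in_root s \<beta>"
  proof -
    have "s \<beta> * t = t \<longleftrightarrow> t = 0" for t
    proof -
      have "s \<beta> * t = t \<longleftrightarrow> (s \<beta> - 1) * t = 0" by (simp add: algebra_simps)
      thus ?thesis using ne by simp
    qed
    thus ?thesis unfolding trivial_centralizer_in_root_def root_act_def by auto
  qed
  show ?thesis using T C triv unfolding torus_witness_def by blast
qed


definition Dv :: "nat \<Rightarrow> nat \<Rightarrow> real \<Rightarrow> real \<Rightarrow> vec" where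
  "Dv i j a b = (\<lambda>t. a * unitv i t + b * unitv j t)"

definition good :: "vec set \<Rightarrow> vec \<Rightarrow> vec \<Rightarrow> bool" where
  "good \<Phi> \<alpha> \<beta> \<longleftrightarrow> (\<exists>\<gamma>\<in>\<Phi>. ip \<gamma> \<gamma> = 2 \<and> ip \<alpha> \<gamma> = 0 \<and> (ip \<beta> \<gamma> = 1 \<or> ip \<beta> \<gamma> = -1))"

lemma ip_comm: "ip v w = ip w v"
  unfolding ip_def by (simp add: mult.commute)

lemma sum_unitv: "k < 8 \<Longrightarrow> (\<Sum>t<8. unitv k t * w t) = w k"
proof -
  assume k: "k < 8"
  have "(\<Sum>t<8. unitv k t * w t) = (\<Sum>t<8. if t = k then w k else 0)"
    by (rule sum.cong) (auto simp: unitv_def)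
  also have "\<dots> = w k" using k by (simp add: sum.delta')
  finally show ?thesis .
qed

lemma ip_Dv: "k < 8 \<Longrightarrow> m < 8 \<Longrightarrow> ip (Dv k m x y) w = x * w k + y * w m"
proof -
  assume km: "k < 8" "m < 8"
  have "ip (Dv k m x y) w = (\<Sum>t<8. x * (unitv k t * w t) + y * (unitv m t * w t))"
    unfolding ip_def Dv_def by (simp add: algebra_simps)
  also have "\<dots> = x * (\<Sum>t<8. unitv k t * w t) + y * (\<Sum>t<8. unitv m t * w t)"
    by (simp add: sum.distrib sum_distrib_left)
  finally show ?thesis using km by (simp add: sum_unitv)
qed

lemma ip_Dv': "k < 8 \<Longrightarrow> m < 8 \<Longrightarrow> ip w (Dv k m x y) = x * w k + y * w m"
  using ip_Dv ip_comm by metis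

lemma Dv_at: "Dv i j a b t = (if t = i then a else 0) + (if t = j then b else 0)"
  unfolding Dv_def unitv_def by simp

lemma G1:
  assumes "Dv k m x y \<in> \<Phi>" "k \<noteq> m" "k < 8" "m < 8" "x \<in> {-1,1}" "y \<in> {-1,1}"
    "x * \<alpha> k + y * \<alpha> m = 0" "x * \<beta> k + y * \<beta> m = 1 \<or> x * \<beta> k + y * \<beta> m = -1"
  shows "good \<Phi> \<alpha> \<beta>"
proof -
  have "ip (Dv k m x y) (Dv k m x y) = 2" using assms(2-6) by (auto simp: ip_Dv Dv_at)
  moreover have "ip \<alpha> (Dv k m x y) = 0" using assms(3,4,7) by (simp add: ip_Dv')
  moreover have "ip \<beta> (Dv k m x y) = 1 \<or> ip \<beta> (Dv k m x y) = -1" using assms(3,4,8) by (simp add: ip_Dv')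
  ultimately show ?thesis unfolding good_def using assms(1) by blast
qed

lemma avoid:
  assumes "length xs < n" shows "\<exists>m<n. m \<notin> set xs"
proof (rule ccontr)
  assume "\<not> ?thesis"
  hence "{..<n} \<subseteq> set xs" by auto
  hence "card {..<n} \<le> card (set xs)" by (intro card_mono) auto
  also have "\<dots> \<le> length xs" by (rule card_length)
  finally show False using assms by simp
qed

lemma sgn1: "x \<in> {-1, 1::real} \<Longrightarrow> x * x = 1" by auto

lemma prod_sgn: "a \<in> {-1,1::real} \<Longrightarrow> b \<in> {-1,1} \<Longrightarrow> a * b \<in> {-1,1}" by auto
lemma neg_sgn: "a \<in> {-1,1::real} \<Longrightarrow> - a \<in> {-1,1}" by auto

lemma H_free:
  assumes D: "\<And>x y. x \<in> {-1,1} \<Longrightarrow> y \<in> {-1,1} \<Longrightarrow> Dv k m x y \<in> \<Phi>"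
    and "k \<noteq> m" "k < 8" "m < 8" "\<alpha> k = 0" "\<alpha> m = 0" "\<beta> k \<in> {-1,1}" "\<beta> m = 0"
  shows "good \<Phi> \<alpha> \<beta>"
proof (rule G1[where k=k and m=m and x="\<beta> k" and y=1])
  show "Dv k m (\<beta> k) 1 \<in> \<Phi>" by (rule D) (use assms in auto)
  have "\<beta> k * \<beta> k = 1" using sgn1 assms(7) by blast
  thus "\<beta> k * \<beta> k + 1 * \<beta> m = 1 \<or> \<beta> k * \<beta> k + 1 * \<beta> m = - 1" using assms by simp
qed (use assms in auto)

lemma H_half:
  assumes D: "\<And>x y. x \<in> {-1,1} \<Longrightarrow> y \<in> {-1,1} \<Longrightarrow> Dv k m x y \<in> \<Phi>"
    and "k \<noteq> m" "k < 8" "m < 8" "\<alpha> k = 0" "\<alpha> m = 0" "2 * \<beta> k \<in> {-1,1}" "2 * \<beta> m \<in> {-1,1}"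
  shows "good \<Phi> \<alpha> \<beta>"
proof (rule G1[where k=k and m=m and x=1 and y="(2 * \<beta> k) * (2 * \<beta> m)"])
  show Y: "(2 * \<beta> k) * (2 * \<beta> m) \<in> {-1,1}" by (rule prod_sgn) (rule assms)+
  show "Dv k m 1 ((2 * \<beta> k) * (2 * \<beta> m)) \<in> \<Phi>" by (rule D[OF _ Y]) simp
  have e: "(2 * \<beta> m) * (2 * \<beta> m) = 1" using sgn1 assms(8) by blast
  have "1 * \<beta> k + (2 * \<beta> k) * (2 * \<beta> m) * \<beta> m = \<beta> k + \<beta> k * ((2 * \<beta> m) * (2 * \<beta> m))"
    by (simp add: algebra_simps)
  also have "\<dots> = 2 * \<beta> k" using e by simp
  finally have c: "1 * \<beta> k + (2 * \<beta> k) * (2 * \<beta> m) * \<beta> m = 2 * \<beta> k" .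
  show "1 * \<beta> k + (2 * \<beta> k) * (2 * \<beta> m) * \<beta> m = 1 \<or> 1 * \<beta> k + (2 * \<beta> k) * (2 * \<beta> m) * \<beta> m = - 1"
    unfolding c using assms(7) by auto
qed (use assms in auto)

lemma H_spin:
  assumes D: "\<And>x y. x \<in> {-1,1} \<Longrightarrow> y \<in> {-1,1} \<Longrightarrow> Dv k m x y \<in> \<Phi>"
    and "k \<noteq> m" "k < 8" "m < 8" "2 * \<alpha> k \<in> {-1,1}" "2 * \<alpha> m \<in> {-1,1}" "\<beta> k \<in> {-1,1}" "\<beta> m = 0"
  shows "good \<Phi> \<alpha> \<beta>"
proof (rule G1[where k=k and m=m and x=1 and y="- ((2 * \<alpha> k) * (2 * \<alpha> m))"])
  show Y: "- ((2 * \<alpha> k) * (2 * \<alpha> m)) \<in> {-1,1}" by (rule neg_sgn, rule prod_sgn) (rule assms)+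
  show "Dv k m 1 (- ((2 * \<alpha> k) * (2 * \<alpha> m))) \<in> \<Phi>" by (rule D[OF _ Y]) simp
  have e: "(2 * \<alpha> m) * (2 * \<alpha> m) = 1" using sgn1 assms(6) by blast
  have "1 * \<alpha> k + - ((2 * \<alpha> k) * (2 * \<alpha> m)) * \<alpha> m = \<alpha> k - \<alpha> k * ((2 * \<alpha> m) * (2 * \<alpha> m))"
    by (simp add: algebra_simps)
  also have "\<dots> = 0" using e by simp
  finally show "1 * \<alpha> k + - ((2 * \<alpha> k) * (2 * \<alpha> m)) * \<alpha> m = 0" .
qed (use assms in auto)

lemma H_agree:
  assumes D: "\<And>x y. x \<in> {-1,1} \<Longrightarrow> y \<in> {-1,1} \<Longrightarrow> Dv k m x y \<in> \<Phi>"
    and "k \<noteq> m" "k < 8" "m < 8" "2 * \<alpha> k \<in> {-1,1}" "2 * \<alpha> m \<in> {-1,1}" "\<beta> k = \<alpha> k" "\<beta> m = - \<alpha> m"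
  shows "good \<Phi> \<alpha> \<beta>"
proof (rule G1[where k=k and m=m and x=1 and y="- ((2 * \<alpha> k) * (2 * \<alpha> m))"])
  show Y: "- ((2 * \<alpha> k) * (2 * \<alpha> m)) \<in> {-1,1}" by (rule neg_sgn, rule prod_sgn) (rule assms)+
  show "Dv k m 1 (- ((2 * \<alpha> k) * (2 * \<alpha> m))) \<in> \<Phi>" by (rule D[OF _ Y]) simp
  have e: "(2 * \<alpha> m) * (2 * \<alpha> m) = 1" using sgn1 assms(6) by blast
  have "1 * \<alpha> k + - ((2 * \<alpha> k) * (2 * \<alpha> m)) * \<alpha> m = \<alpha> k - \<alpha> k * ((2 * \<alpha> m) * (2 * \<alpha> m))"
    by (simp add: algebra_simps)
  also have "\<dots> = 0" using e by simp
  finally show "1 * \<alpha> k + - ((2 * \<alpha> k) * (2 * \<alpha> m)) * \<alpha> m = 0" .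
  have "1 * \<beta> k + - ((2 * \<alpha> k) * (2 * \<alpha> m)) * \<beta> m = \<alpha> k + \<alpha> k * ((2 * \<alpha> m) * (2 * \<alpha> m))"
    using assms(7,8) by (simp add: algebra_simps)
  also have "\<dots> = 2 * \<alpha> k" using e by simp
  finally have c: "1 * \<beta> k + - ((2 * \<alpha> k) * (2 * \<alpha> m)) * \<beta> m = 2 * \<alpha> k" .
  show "1 * \<beta> k + - ((2 * \<alpha> k) * (2 * \<alpha> m)) * \<beta> m = 1 \<or> 1 * \<beta> k + - ((2 * \<alpha> k) * (2 * \<alpha> m)) * \<beta> m = - 1"
    unfolding c using assms(5) by auto
qed (use assms in auto)

lemma H_F4:
  assumes D: "\<And>x y. x \<in> {-1,1} \<Longrightarrow> y \<in> {-1,1} \<Longrightarrow> Dv k m x y \<in> \<Phi>"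
    and "k \<noteq> m" "k < 8" "m < 8" "\<alpha> k \<in> {-1,1}" "\<alpha> m \<in> {-1,1}" "\<beta> k \<in> {-1,1}" "\<beta> m = 0"
  shows "good \<Phi> \<alpha> \<beta>"
proof (rule G1[where k=k and m=m and x=1 and y="- (\<alpha> k * \<alpha> m)"])
  show Y: "- (\<alpha> k * \<alpha> m) \<in> {-1,1}" by (rule neg_sgn, rule prod_sgn) (rule assms)+
  show "Dv k m 1 (- (\<alpha> k * \<alpha> m)) \<in> \<Phi>" by (rule D[OF _ Y]) simp
  have e: "\<alpha> m * \<alpha> m = 1" using sgn1 assms(6) by blast
  have "1 * \<alpha> k + - (\<alpha> k * \<alpha> m) * \<alpha> m = \<alpha> k - \<alpha> k * (\<alpha> m * \<alpha> m)"
    by (simp add: algebra_simps)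
  also have "\<dots> = 0" using e by simp
  finally show "1 * \<alpha> k + - (\<alpha> k * \<alpha> m) * \<alpha> m = 0" .
qed (use assms in auto)



definition pt4 :: "nat \<Rightarrow> nat \<Rightarrow> nat \<Rightarrow> nat \<Rightarrow> real \<Rightarrow> real \<Rightarrow> real \<Rightarrow> real \<Rightarrow> real \<Rightarrow> nat \<Rightarrow> real" where
  "pt4 i j p r A B C D E t = (if t = i then A else if t = j then B else if t = p then C else if t = r then D else E)"

lemma sum_pt4:
  assumes "distinct [i,j,p,r]" "i < 8" "j < 8" "p < 8" "r < 8"
  shows "(\<Sum>t<8. pt4 i j p r A B C D E t) = A + B + C + D + 4 * E"
proof -
  let ?S = "{i,j,p,r}"
  have sub: "?S \<subseteq> {..<8}" using assms by auto
  have "(\<Sum>t<8. pt4 i j p r A B C D E t) = (\<Sum>t\<in>?S. pt4 i j p r A B C D E t) + (\<Sum>t\<in>{..<8} - ?S. pt4 i j p r A B C D E t)"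
    using sub by (metis (no_types, lifting) finite_lessThan sum.subset_diff add.commute)
  moreover have "(\<Sum>t\<in>?S. pt4 i j p r A B C D E t) = A + B + C + D"
    using assms(1) by (simp add: pt4_def)
  moreover have "(\<Sum>t\<in>{..<8} - ?S. pt4 i j p r A B C D E t) = (\<Sum>t\<in>{..<8} - ?S. E)"
    by (rule sum.cong) (auto simp: pt4_def)
  moreover have "card ({..<8::nat} - ?S) = 4"
    using sub assms(1) by (simp add: card_Diff_subset)
  ultimately show ?thesis by simp
qed

lemma prod_pt4:
  assumes "distinct [i,j,p,r]" "i < 8" "j < 8" "p < 8" "r < 8"
  shows "(\<Prod>t<8. pt4 i j p r A B C D E t) = A * B * C * D * E ^ 4"
proof -
  let ?S = "{i,j,p,r}"
  have sub: "?S \<subseteq> {..<8}" using assms by auto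
  have "(\<Prod>t<8. pt4 i j p r A B C D E t) = (\<Prod>t\<in>?S. pt4 i j p r A B C D E t) * (\<Prod>t\<in>{..<8} - ?S. pt4 i j p r A B C D E t)"
    using sub by (metis (no_types, lifting) finite_lessThan prod.subset_diff mult.commute)
  moreover have "(\<Prod>t\<in>?S. pt4 i j p r A B C D E t) = A * B * C * D"
    using assms(1) by (simp add: pt4_def)
  moreover have "(\<Prod>t\<in>{..<8} - ?S. pt4 i j p r A B C D E t) = (\<Prod>t\<in>{..<8} - ?S. E)"
    by (rule prod.cong) (auto simp: pt4_def)
  moreover have "card ({..<8::nat} - ?S) = 4"
    using sub assms(1) by (simp add: card_Diff_subset)
  ultimately show ?thesis by simp
qed

lemma prod_card:
  fixes v :: "nat \<Rightarrow> real" and n :: nat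
  assumes "\<forall>k<n. 2 * v k \<in> {-1, 1::real}"
  shows "(\<Prod>k<n. 2 * v k) = (-1) ^ card {k. k < n \<and> v k < 0}"
  using assms
proof (induction n)
  case 0 then show ?case by simp
next
  case (Suc n)
  have IH: "(\<Prod>k<n. 2 * v k) = (-1) ^ card {k. k < n \<and> v k < 0}" using Suc by auto
  have vn: "2 * v n \<in> {-1,1}" using Suc.prems by auto
  show ?case
  proof (cases "v n < 0")
    case True
    hence "{k. k < Suc n \<and> v k < 0} = insert n {k. k < n \<and> v k < 0}" by auto
    moreover have "n \<notin> {k. k < n \<and> v k < 0}" by auto
    ultimately have "card {k. k < Suc n \<and> v k < 0} = Suc (card {k. k < n \<and> v k < 0})" by simp
    moreover have "2 * v n = -1" using vn True by auto
    ultimately show ?thesis using IH by simp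
  next
    case False
    hence "{k. k < Suc n \<and> v k < 0} = {k. k < n \<and> v k < 0}" by (auto simp: less_Suc_eq)
    moreover have "2 * v n = 1" using vn False by auto
    ultimately show ?thesis using IH by simp
  qed
qed

definition spinr :: "vec \<Rightarrow> bool" where
  "spinr v \<longleftrightarrow> (\<forall>k<8. 2 * v k \<in> {-1, 1}) \<and> (\<forall>k\<ge>8. v k = 0)"

lemma half_iff: "(x \<in> {1/2, -1/2}) = (2 * x \<in> {-1, 1::real})" by auto

lemma m1pow: "((-1::real) ^ c = 1) = even c" by (induct c) auto

lemma even_prod: "spinr v \<Longrightarrow> even (card {k. k < 8 \<and> v k < 0}) \<longleftrightarrow> (\<Prod>k<8. 2 * v k) = 1"
  unfolding spinr_def by (simp add: prod_card m1pow)

lemma E8_D: "i \<noteq> j \<Longrightarrow> i < 8 \<Longrightarrow> j < 8 \<Longrightarrow> a \<in> {-1,1} \<Longrightarrow> b \<in> {-1,1} \<Longrightarrow> Dv i j a b \<in> E8_roots"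
proof -
  assume h: "i \<noteq> j" "i < 8" "j < 8" "a \<in> {-1,1}" "b \<in> {-1,1}"
  show ?thesis
  proof (cases "i < j")
    case True thus ?thesis using h unfolding E8_roots_def Dv_def by blast
  next
    case False
    hence "j < i" using h by simp
    moreover have "Dv i j a b = Dv j i b a" unfolding Dv_def by (simp add: add.commute)
    ultimately show ?thesis using h unfolding E8_roots_def Dv_def by (metis (mono_tags, lifting) UnI1 mem_Collect_eq)
  qed
qed

lemma E8_S: "spinr v \<Longrightarrow> (\<Prod>k<8. 2 * v k) = 1 \<Longrightarrow> v \<in> E8_roots"
  using even_prod[of v] unfolding E8_roots_def spinr_def by (auto simp: half_iff)

lemma E8_cases:
  assumes "v \<in> E8_roots"
  obtains i j a b where "i < j" "j < 8" "a \<in> {-1,1}" "b \<in> {-1,1}" "v = Dv i j a b"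
  | "spinr v" "(\<Prod>k<8. 2 * v k) = 1"
proof -
  consider "\<exists>i j a b. i < j \<and> j < 8 \<and> a \<in> {-1, 1} \<and> b \<in> {-1, 1} \<and> v = Dv i j a b"
    | "(\<forall>k<8. v k \<in> {1/2, -1/2}) \<and> (\<forall>k\<ge>8. v k = 0) \<and> even (card {k. k < 8 \<and> v k < 0})"
    using assms unfolding E8_roots_def Dv_def by blast
  thus ?thesis
  proof cases
    case 1 thus ?thesis using that by blast
  next
    case 2
    hence "spinr v" unfolding spinr_def by (auto simp: half_iff)
    thus ?thesis using that 2 even_prod by blast
  qed
qed

lemma E8_zero: "v \<in> E8_roots \<Longrightarrow> 8 \<le> k \<Longrightarrow> v k = 0"
  by (erule E8_cases) (auto simp: Dv_at spinr_def)

lemma spin_norm: "spinr v \<Longrightarrow> ip v v = 2"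
proof -
  assume s: "spinr v"
  have "ip v v = (\<Sum>k<(8::nat). 1/4)"
    unfolding ip_def
  proof (rule sum.cong)
    fix k assume "k \<in> {..<8::nat}"
    hence "2 * v k \<in> {-1,1}" using s unfolding spinr_def by auto
    hence "(2 * v k) * (2 * v k) = 1" by (rule sgn1)
    thus "v k * v k = 1/4" by (simp add: algebra_simps)
  qed simp
  thus ?thesis by simp
qed

lemma E8_norm: "v \<in> E8_roots \<Longrightarrow> ip v v = 2"
  by (erule E8_cases) (auto simp: ip_Dv Dv_at spin_norm)

lemma ip_e67: "ip v (\<lambda>k. unitv i k + unitv j k) = v i + v j" if "i < 8" "j < 8"
proof -
  have "(\<lambda>k. unitv i k + unitv j k) = Dv i j 1 1" unfolding Dv_def by simp
  thus ?thesis using ip_Dv'[OF that] by simp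
qed

lemma E7_iff: "v \<in> E7_roots \<longleftrightarrow> v \<in> E8_roots \<and> v 6 + v 7 = 0"
  unfolding E7_roots_def using ip_e67[of 6 7 v] by simp

lemma E6_iff: "v \<in> E6_roots \<longleftrightarrow> v \<in> E8_roots \<and> v 6 + v 7 = 0 \<and> v 5 + v 7 = 0"
  unfolding E6_roots_def E7_iff using ip_e67[of 5 7 v] by auto

lemma indep_ne:
  assumes "lin_indep2 a b" shows "a \<noteq> b" "a \<noteq> (\<lambda>k. - b k)"
proof -
  show "a \<noteq> b"
  proof
    assume "a = b"
    hence "(\<lambda>k. 1 * a k + (-1) * b k) = (\<lambda>k. 0)" by simp
    from assms[unfolded lin_indep2_def, rule_format, OF this] show False by simp
  qed
  show "a \<noteq> (\<lambda>k. - b k)"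
  proof
    assume "a = (\<lambda>k. - b k)"
    hence "(\<lambda>k. 1 * a k + 1 * b k) = (\<lambda>k. 0)" by simp
    from assms[unfolded lin_indep2_def, rule_format, OF this] show False by simp
  qed
qed



definition sp :: "nat \<Rightarrow> nat \<Rightarrow> nat \<Rightarrow> nat \<Rightarrow> real \<Rightarrow> real \<Rightarrow> real \<Rightarrow> real \<Rightarrow> vec" where
  "sp i j p r A B C D = (\<lambda>t. if t < 8 then pt4 i j p r A B C D (1/2) t else 0)"

lemma sp_spin:
  assumes "distinct [i,j,p,r]" "i < 8" "j < 8" "p < 8" "r < 8"
    "2*A \<in> {-1,1}" "2*B \<in> {-1,1}" "2*C \<in> {-1,1}" "2*D \<in> {-1,1}"
  shows "spinr (sp i j p r A B C D)"
    "(\<Prod>t<8. 2 * sp i j p r A B C D t) = (2*A) * (2*B) * (2*C) * (2*D)"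
proof -
  show "spinr (sp i j p r A B C D)" unfolding spinr_def sp_def pt4_def using assms(6-9) by auto
  have "(\<Prod>t<8. 2 * sp i j p r A B C D t) = (\<Prod>t<8. pt4 i j p r (2*A) (2*B) (2*C) (2*D) 1 t)"
    by (rule prod.cong) (auto simp: sp_def pt4_def)
  also have "\<dots> = (2*A) * (2*B) * (2*C) * (2*D)" using prod_pt4[OF assms(1-5)] by simp
  finally show "(\<Prod>t<8. 2 * sp i j p r A B C D t) = (2*A) * (2*B) * (2*C) * (2*D)" .
qed

lemma sp_at: "distinct [i,j,p,r] \<Longrightarrow> i < 8 \<Longrightarrow> j < 8 \<Longrightarrow> p < 8 \<Longrightarrow> r < 8 \<Longrightarrow>
  sp i j p r A B C D i = A \<and> sp i j p r A B C D j = B \<and> sp i j p r A B C D p = C \<and> sp i j p r A B C D r = D"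
  unfolding sp_def pt4_def by auto

lemma sp_other: "t < 8 \<Longrightarrow> t \<notin> {i,j,p,r} \<Longrightarrow> sp i j p r A B C D t = 1/2"
  unfolding sp_def pt4_def by auto

lemma goodI: "\<gamma> \<in> \<Phi> \<Longrightarrow> ip \<gamma> \<gamma> = 2 \<Longrightarrow> ip \<alpha> \<gamma> = 0 \<Longrightarrow> ip \<beta> \<gamma> = 1 \<or> ip \<beta> \<gamma> = -1 \<Longrightarrow> good \<Phi> \<alpha> \<beta>"
  unfolding good_def by blast

lemma Dv_neg: "(\<lambda>k. - Dv i j a b k) = Dv i j (-a) (-b)"
  unfolding Dv_def by simp

lemma same_supp:
  assumes "lin_indep2 (Dv i j a b) (Dv i j c d)" "a \<in> {-1,1}" "b \<in> {-1,1}" "c \<in> {-1,1}" "d \<in> {-1,1}"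
  shows "(c = a \<and> d = -b) \<or> (c = -a \<and> d = b)"
proof -
  have n1: "\<not> (c = a \<and> d = b)" using indep_ne(1)[OF assms(1)] by auto
  have n2: "\<not> (c = -a \<and> d = -b)"
  proof
    assume "c = -a \<and> d = -b"
    hence "(\<lambda>k. - Dv i j c d k) = Dv i j a b" unfolding Dv_neg by simp
    thus False using indep_ne(2)[OF assms(1)] by simp
  qed
  show ?thesis using n1 n2 assms(2-5) by auto
qed

lemma spin_sign: "spinr v \<Longrightarrow> k < 8 \<Longrightarrow> 2 * v k \<in> {-1,1}"
  unfolding spinr_def by auto

lemma spin_agree:
  assumes "spinr a" "spinr b" "lin_indep2 a b"
  obtains k m where "k < 8" "m < 8" "b k = a k" "b m = - a m" "k \<noteq> m"
proof -
  have "\<exists>k<8. b k = a k"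
  proof (rule ccontr)
    assume "\<not> ?thesis"
    hence "\<forall>k<8. b k = - a k" using assms(1,2) unfolding spinr_def by force
    have "a = (\<lambda>k. - b k)"
    proof
      fix t show "a t = - b t"
      proof (cases "t < 8")
        case True thus ?thesis using \<open>\<forall>k<8. b k = - a k\<close> by simp
      next
        case False thus ?thesis using assms(1,2) unfolding spinr_def by simp
      qed
    qed
    thus False using indep_ne(2)[OF assms(3)] by simp
  qed
  then obtain k where k: "k < 8" "b k = a k" by blast
  have "\<exists>m<8. b m = - a m"
  proof (rule ccontr)
    assume "\<not> ?thesis"
    hence "\<forall>k<8. b k = a k" using assms(1,2) unfolding spinr_def by force
    have "a = b"
    proof
      fix t show "a t = b t"
      proof (cases "t < 8")
        case True thus ?thesis using \<open>\<forall>k<8. b k = a k\<close> by simp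
      next
        case False thus ?thesis using assms(1,2) unfolding spinr_def by simp
      qed
    qed
    thus False using indep_ne(1)[OF assms(3)] by simp
  qed
  then obtain m where m: "m < 8" "b m = - a m" by blast
  have "a k \<noteq> 0" using spin_sign[OF assms(1) k(1)] by auto
  hence "k \<noteq> m" using k m by auto
  thus ?thesis using that k m by blast
qed

lemma E8_good:
  assumes A: "\<alpha> \<in> E8_roots" and B: "\<beta> \<in> E8_roots" and I: "lin_indep2 \<alpha> \<beta>"
  shows "good E8_roots \<alpha> \<beta>"
proof -
  have D8: "\<And>x y. x \<in> {-1,1} \<Longrightarrow> y \<in> {-1,1} \<Longrightarrow> Dv k m x y \<in> E8_roots" if "k \<noteq> m" "k < 8" "m < 8" for k m
    using E8_D that by blast
  show ?thesis
  using A proof (cases rule: E8_cases)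
    case (1 i j a b)
    note a = 1
    show ?thesis
    using B proof (cases rule: E8_cases)
      case (1 k l c d)
      note b = 1
      show ?thesis
      proof (cases "k \<notin> {i,j}")
        case True
        obtain m where m: "m < 8" "m \<notin> set [i,j,k,l]" using avoid[of "[i,j,k,l]" 8] by auto
        have km: "k \<noteq> m" "k < 8" using m b by auto
        show ?thesis
        proof (rule H_free[OF D8[OF km m(1)] km m(1)])
          show "\<alpha> k = 0" "\<alpha> m = 0" using a True m by (simp_all add: Dv_at)
          show "\<beta> k \<in> {-1,1}" "\<beta> m = 0" using b m by (simp_all add: Dv_at)
        qed
      next
        case F1: False
        show ?thesis
        proof (cases "l \<notin> {i,j}")
          case True
          obtain m where m: "m < 8" "m \<notin> set [i,j,k,l]" using avoid[of "[i,j,k,l]" 8] by auto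
          have km: "l \<noteq> m" "l < 8" using m b by auto
          show ?thesis
          proof (rule H_free[OF D8[OF km m(1)] km m(1)])
            show "\<alpha> l = 0" "\<alpha> m = 0" using a True m by (simp_all add: Dv_at)
            show "\<beta> l \<in> {-1,1}" "\<beta> m = 0" using b m by (simp_all add: Dv_at)
          qed
        next
          case False
          hence kl: "k = i" "l = j" using F1 a b by auto
          have cd: "(c = a \<and> d = -b) \<or> (c = -a \<and> d = b)"
            by (rule same_supp) (use I a b kl in simp_all)
          obtain p where p: "p < 8" "p \<notin> set [i,j]" using avoid[of "[i,j]" 8] by auto
          obtain r where r: "r < 8" "r \<notin> set [i,j,p]" using avoid[of "[i,j,p]" 8] by auto
          define \<gamma> where "\<gamma> = sp i j p r (a/2) (-b/2) (-(a*b)/2) (1/2)"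
          have dis: "distinct [i,j,p,r]" using a p r by auto
          have ij: "i < 8" "j < 8" using a by auto
          have s2: "2*(a/2) \<in> {-1,1}" "2*(-b/2) \<in> {-1,1}" "2*(-(a*b)/2) \<in> {-1,1}" "2*(1/2::real) \<in> {-1,1}"
            using a by auto
          have sg: "spinr \<gamma>" "(\<Prod>t<8. 2 * \<gamma> t) = (2*(a/2)) * (2*(-b/2)) * (2*(-(a*b)/2)) * (2*(1/2))"
            using sp_spin[OF dis ij p(1) r(1) s2] unfolding \<gamma>_def by blast+
          have "(\<Prod>t<8. 2 * \<gamma> t) = 1" unfolding sg(2) using a by auto
          hence G: "\<gamma> \<in> E8_roots" using E8_S sg(1) by blast
          have gi: "\<gamma> i = a/2" "\<gamma> j = -b/2" using sp_at[OF dis ij p(1) r(1)] unfolding \<gamma>_def by blast+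
          show ?thesis
          proof (rule goodI[OF G E8_norm[OF G]])
            show "ip \<alpha> \<gamma> = 0" unfolding a(5) ip_Dv[OF ij] gi using a(3,4) by auto
            show "ip \<beta> \<gamma> = 1 \<or> ip \<beta> \<gamma> = -1" unfolding b(5) kl ip_Dv[OF ij] gi using cd a(3,4) by auto
          qed
        qed
      qed
    next
      case 2
      obtain k where k: "k < 8" "k \<notin> set [i,j]" using avoid[of "[i,j]" 8] by auto
      obtain l where l: "l < 8" "l \<notin> set [i,j,k]" using avoid[of "[i,j,k]" 8] by auto
      have kl: "k \<noteq> l" using l by auto
      show ?thesis
      proof (rule H_half[OF D8[OF kl k(1) l(1)] kl k(1) l(1)])
        show "\<alpha> k = 0" "\<alpha> l = 0" using a k l by (simp_all add: Dv_at)
        show "2 * \<beta> k \<in> {-1,1}" "2 * \<beta> l \<in> {-1,1}" using spin_sign 2 k l by blast+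
      qed
    qed
  next
    case 2
    note a = 2
    show ?thesis
    using B proof (cases rule: E8_cases)
      case (1 k l c d)
      obtain m where m: "m < 8" "m \<notin> set [k,l]" using avoid[of "[k,l]" 8] by auto
      have km: "k \<noteq> m" "k < 8" using m 1 by auto
      show ?thesis
      proof (rule H_spin[OF D8[OF km m(1)] km m(1)])
        show "2 * \<alpha> k \<in> {-1,1}" "2 * \<alpha> m \<in> {-1,1}" using spin_sign a km m by blast+
        show "\<beta> k \<in> {-1,1}" "\<beta> m = 0" using 1 m by (simp_all add: Dv_at)
      qed
    next
      case 2
      obtain k m where km: "k < 8" "m < 8" "\<beta> k = \<alpha> k" "\<beta> m = - \<alpha> m" "k \<noteq> m"
        using spin_agree[OF a(1) 2(1) I] by blast
      show ?thesis
        by (rule H_agree[OF D8[OF km(5) km(1,2)] km(5) km(1,2) spin_sign[OF a(1) km(1)] spin_sign[OF a(1) km(2)] km(3,4)])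
    qed
  qed
qed



lemma E8_sub: "v \<in> E7_roots \<Longrightarrow> v \<in> E8_roots" "v \<in> E6_roots \<Longrightarrow> v \<in> E8_roots"
  unfolding E7_iff E6_iff by auto

lemma Dtype_E7:
  assumes "i < j" "j < 8" "a \<in> {-1,1}" "b \<in> {-1,1}" "Dv i j a b 6 + Dv i j a b 7 = 0"
  shows "j < 6 \<or> (i = 6 \<and> j = 7 \<and> b = -a)"
proof (rule ccontr)
  assume n: "\<not> ?thesis"
  have "j = 6 \<or> j = 7" using n assms(2) by auto
  moreover have "j = 6 \<Longrightarrow> False" using assms by (auto simp: Dv_at)
  moreover have "j = 7 \<Longrightarrow> i = 6 \<Longrightarrow> False" using assms n by (auto simp: Dv_at)
  moreover have "j = 7 \<Longrightarrow> i \<noteq> 6 \<Longrightarrow> False" using assms by (auto simp: Dv_at)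
  ultimately show False by blast
qed

lemma E7_cases:
  assumes "v \<in> E7_roots"
  obtains i j a b where "i < j" "j < 6" "a \<in> {-1,1}" "b \<in> {-1,1}" "v = Dv i j a b"
  | a where "a \<in> {-1,1}" "v = Dv 6 7 a (-a)"
  | "spinr v" "(\<Prod>k<8. 2 * v k) = 1" "v 6 + v 7 = 0"
proof -
  have v8: "v \<in> E8_roots" and c: "v 6 + v 7 = 0" using assms unfolding E7_iff by auto
  show ?thesis
  using v8 proof (cases rule: E8_cases)
    case (1 i j a b)
    have "j < 6 \<or> (i = 6 \<and> j = 7 \<and> b = -a)" by (rule Dtype_E7) (use 1 c in simp_all)
    thus ?thesis using that 1 by blast
  next
    case 2 thus ?thesis using that c by blast
  qed
qed

lemma E7_D: "k \<noteq> m \<Longrightarrow> k < 6 \<Longrightarrow> m < 6 \<Longrightarrow> x \<in> {-1,1} \<Longrightarrow> y \<in> {-1,1} \<Longrightarrow> Dv k m x y \<in> E7_roots"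
  unfolding E7_iff using E8_D by (auto simp: Dv_at)

lemma spinw:
  assumes "i \<noteq> j" "i < 6" "j < 6" "a \<in> {-1,1}" "b \<in> {-1,1}"
  obtains \<gamma> where "\<gamma> \<in> E8_roots" "\<gamma> i = a/2" "\<gamma> j = -b/2" "\<gamma> 6 = 1/2" "\<gamma> 7 = -1/2"
    "i < 5 \<Longrightarrow> j < 5 \<Longrightarrow> \<gamma> 5 = 1/2"
proof -
  obtain p where p: "p < 5" "p \<notin> set [i,j]" using avoid[of "[i,j]" 5] by auto
  define \<gamma> where "\<gamma> = sp i j p 7 (a/2) (-b/2) ((a*b)/2) (-1/2)"
  have dis: "distinct [i,j,p,7]" using assms p by auto
  have ij: "i < 8" "j < 8" "p < 8" "(7::nat) < 8" using assms p by auto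
  have s2: "2*(a/2) \<in> {-1,1}" "2*(-b/2) \<in> {-1,1}" "2*((a*b)/2) \<in> {-1,1}" "2*(-1/2::real) \<in> {-1,1}"
    using assms by auto
  have sg: "spinr \<gamma>" "(\<Prod>t<8. 2 * \<gamma> t) = (2*(a/2)) * (2*(-b/2)) * (2*((a*b)/2)) * (2*(-1/2))"
    using sp_spin[OF dis ij s2] unfolding \<gamma>_def by blast+
  have "(\<Prod>t<8. 2 * \<gamma> t) = 1" unfolding sg(2) using assms(4,5) by auto
  hence G: "\<gamma> \<in> E8_roots" using E8_S sg(1) by blast
  have gi: "\<gamma> i = a/2" "\<gamma> j = -b/2" "\<gamma> 7 = -1/2" using sp_at[OF dis ij] unfolding \<gamma>_def by blast+
  have g6: "\<gamma> 6 = 1/2" unfolding \<gamma>_def using assms p by (intro sp_other) auto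
  have g5: "\<gamma> 5 = 1/2" if "i < 5" "j < 5" unfolding \<gamma>_def using that p by (intro sp_other) auto
  show ?thesis using that G gi g6 g5 by blast
qed

definition flipv :: "vec \<Rightarrow> vec" where
  "flipv v = (\<lambda>t. pt4 0 1 6 7 (-1) (-1) (-1) (-1) 1 t * v t)"

lemma flip_dis: "distinct [0::nat,1,6,7]" "(0::nat) < 8" "(1::nat) < 8" "(6::nat) < 8" "(7::nat) < 8" by auto

lemma flipv_E7:
  assumes "spinr v" "(\<Prod>k<8. 2 * v k) = 1" "v 6 + v 7 = 0"
  shows "flipv v \<in> E7_roots" "ip v (flipv v) = 0"
proof -
  have sp: "spinr (flipv v)" unfolding spinr_def
  proof (intro conjI allI impI)
    fix k :: nat assume "k < 8"
    hence "2 * v k \<in> {-1,1}" using spin_sign[OF assms(1)] by blast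
    thus "2 * flipv v k \<in> {-1,1}" unfolding flipv_def pt4_def by auto
  next
    fix k :: nat assume "8 \<le> k" thus "flipv v k = 0" using assms(1) unfolding flipv_def spinr_def by simp
  qed
  have "(\<Prod>k<8. 2 * flipv v k) = (\<Prod>k<8. pt4 0 1 6 7 (-1) (-1) (-1) (-1) 1 k * (2 * v k))"
    unfolding flipv_def by (simp add: ac_simps)
  also have "\<dots> = (\<Prod>k<8. pt4 0 1 6 7 (-1) (-1) (-1) (-1) 1 k) * (\<Prod>k<8. 2 * v k)"
    by (rule prod.distrib)
  also have "\<dots> = 1" using prod_pt4[OF flip_dis] assms(2) by simp
  finally have "flipv v \<in> E8_roots" using E8_S sp by blast
  moreover have "flipv v 6 + flipv v 7 = 0" using assms(3) unfolding flipv_def pt4_def by simp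
  ultimately show "flipv v \<in> E7_roots" unfolding E7_iff by simp
  have "ip v (flipv v) = (\<Sum>t<8. pt4 0 1 6 7 (-1/4) (-1/4) (-1/4) (-1/4) (1/4) t)"
    unfolding ip_def
  proof (rule sum.cong)
    fix t assume "t \<in> {..<8::nat}"
    hence "(2 * v t) * (2 * v t) = 1" using assms(1) sgn1 unfolding spinr_def by auto
    hence "v t * v t = 1/4" by (simp add: algebra_simps)
    thus "v t * flipv v t = pt4 0 1 6 7 (-1/4) (-1/4) (-1/4) (-1/4) (1/4) t"
      unfolding flipv_def pt4_def by (auto simp: algebra_simps)
  qed simp
  also have "\<dots> = 0" using sum_pt4[OF flip_dis] by simp
  finally show "ip v (flipv v) = 0" .
qed

lemma sq4: "spinr v \<Longrightarrow> t < 8 \<Longrightarrow> v t * v t = 1/4"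
proof -
  assume "spinr v" "t < 8"
  hence "(2 * v t) * (2 * v t) = 1" using sgn1 unfolding spinr_def by auto
  thus "v t * v t = 1/4" by (simp add: algebra_simps)
qed

lemma E7_good:
  assumes A: "\<alpha> \<in> E7_roots" and B: "\<beta> \<in> E7_roots" and I: "lin_indep2 \<alpha> \<beta>"
  shows "good E7_roots \<alpha> \<beta>"
proof -
  have D7: "\<And>x y. x \<in> {-1,1} \<Longrightarrow> y \<in> {-1,1} \<Longrightarrow> Dv k m x y \<in> E7_roots" if "k \<noteq> m" "k < 6" "m < 6" for k m
    using E7_D that by blast
  have D7': "\<And>x y. x \<in> {-1,1} \<Longrightarrow> y \<in> {-1,1} \<Longrightarrow> Dv k m x y \<in> E7_roots" if "k \<noteq> m" "k < 6" "m < 6" for k m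
    using E7_D that by blast
  have sw: "good E7_roots (Dv i j a b) \<beta>"
    if h: "i < j" "j < 6" "a \<in> {-1,1}" "b \<in> {-1,1}"
       and hb: "\<And>\<gamma>. \<gamma> i = a/2 \<Longrightarrow> \<gamma> j = -b/2 \<Longrightarrow> \<gamma> 6 = 1/2 \<Longrightarrow> \<gamma> 7 = -1/2 \<Longrightarrow> ip \<beta> \<gamma> = 1 \<or> ip \<beta> \<gamma> = -1"
       for i j a b
  proof -
    obtain \<gamma> where g: "\<gamma> \<in> E8_roots" "\<gamma> i = a/2" "\<gamma> j = -b/2" "\<gamma> 6 = 1/2" "\<gamma> 7 = -1/2"
      using spinw[of i j a b] h by auto
    have G: "\<gamma> \<in> E7_roots" unfolding E7_iff using g by simp
    have ij: "i < 8" "j < 8" using h by auto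
    show ?thesis
    proof (rule goodI[OF G E8_norm[OF g(1)]])
      show "ip (Dv i j a b) \<gamma> = 0" unfolding ip_Dv[OF ij] g(2,3) using h(3,4) by auto
      show "ip \<beta> \<gamma> = 1 \<or> ip \<beta> \<gamma> = -1" by (rule hb) (use g in simp_all)
    qed
  qed
  show ?thesis
  using A proof (cases rule: E7_cases)
    case (1 i j a b)
    note a = 1
    show ?thesis
    using B proof (cases rule: E7_cases)
      case (1 k l c d)
      note b = 1
      show ?thesis
      proof (cases "k \<notin> {i,j}")
        case True
        obtain m where m: "m < 6" "m \<notin> set [i,j,k,l]" using avoid[of "[i,j,k,l]" 6] by auto
        have km: "k \<noteq> m" "k < 6" using m b by auto
        show ?thesis
        proof (rule H_free[OF D7[OF km m(1)] km(1)])
          show "\<alpha> k = 0" "\<alpha> m = 0" using a True m by (simp_all add: Dv_at)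
          show "\<beta> k \<in> {-1,1}" "\<beta> m = 0" using b m by (simp_all add: Dv_at)
        qed (use km m in auto)
      next
        case F1: False
        show ?thesis
        proof (cases "l \<notin> {i,j}")
          case True
          obtain m where m: "m < 6" "m \<notin> set [i,j,k,l]" using avoid[of "[i,j,k,l]" 6] by auto
          have km: "l \<noteq> m" "l < 6" using m b by auto
          show ?thesis
          proof (rule H_free[OF D7[OF km m(1)] km(1)])
            show "\<alpha> l = 0" "\<alpha> m = 0" using a True m by (simp_all add: Dv_at)
            show "\<beta> l \<in> {-1,1}" "\<beta> m = 0" using b m by (simp_all add: Dv_at)
          qed (use km m in auto)
        next
          case False
          hence kl: "k = i" "l = j" using F1 a b by auto
          have cd: "(c = a \<and> d = -b) \<or> (c = -a \<and> d = b)"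
            by (rule same_supp) (use I a b kl in simp_all)
          have ij: "i < 8" "j < 8" using a by auto
          show ?thesis unfolding a(5)
          proof (rule sw[OF a(1-4)])
            fix \<gamma> :: vec assume "\<gamma> i = a/2" "\<gamma> j = -b/2"
            thus "ip \<beta> \<gamma> = 1 \<or> ip \<beta> \<gamma> = -1" unfolding b(5) kl ip_Dv[OF ij] using cd a(3,4) by auto
          qed
        qed
      qed
    next
      case (2 c)
      show ?thesis unfolding a(5)
      proof (rule sw[OF a(1-4)])
        fix \<gamma> :: vec assume "\<gamma> 6 = 1/2" "\<gamma> 7 = -1/2"
        thus "ip \<beta> \<gamma> = 1 \<or> ip \<beta> \<gamma> = -1" unfolding 2(2) ip_Dv[of 6 7, simplified] using 2(1) by auto
      qed
    next
      case 3
      obtain k where k: "k < 6" "k \<notin> set [i,j]" using avoid[of "[i,j]" 6] by auto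
      obtain l where l: "l < 6" "l \<notin> set [i,j,k]" using avoid[of "[i,j,k]" 6] by auto
      have kl: "k \<noteq> l" using l by auto
      show ?thesis
      proof (rule H_half[OF D7[OF kl k(1) l(1)] kl])
        show "\<alpha> k = 0" "\<alpha> l = 0" using a k l by (simp_all add: Dv_at)
        show "2 * \<beta> k \<in> {-1,1}" "2 * \<beta> l \<in> {-1,1}" using spin_sign 3 k l by auto
      qed (use k l in auto)
    qed
  next
    case (2 a)
    note a = 2
    show ?thesis
    using B proof (cases rule: E7_cases)
      case (1 k l c d)
      note b = 1
      obtain m where m: "m < 6" "m \<notin> set [k,l]" using avoid[of "[k,l]" 6] by auto
      have km: "k \<noteq> m" "k < 6" using m b by auto
      show ?thesis
      proof (rule H_free[OF D7[OF km m(1)] km(1)])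
        show "\<alpha> k = 0" "\<alpha> m = 0" using a km m by (simp_all add: Dv_at)
        show "\<beta> k \<in> {-1,1}" "\<beta> m = 0" using b m by (simp_all add: Dv_at)
      qed (use km m in auto)
    next
      case (2 c)
      have "c = a \<or> c = -a" using 2 a by auto
      hence False using indep_ne[OF I] unfolding a(2) 2(2) Dv_neg by auto
      thus ?thesis ..
    next
      case 3
      have kl: "(0::nat) \<noteq> 1" "(0::nat) < 6" "(1::nat) < 6" by auto
      show ?thesis
      proof (rule H_half[OF D7[OF kl] kl(1)])
        show "\<alpha> 0 = 0" "\<alpha> 1 = 0" using a by (simp_all add: Dv_at)
        show "2 * \<beta> 0 \<in> {-1,1}" "2 * \<beta> 1 \<in> {-1,1}" using spin_sign 3 by auto
      qed auto
    qed
  next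
    case 3
    note a = 3
    show ?thesis
    using B proof (cases rule: E7_cases)
      case (1 k l c d)
      obtain m where m: "m < 6" "m \<notin> set [k,l]" using avoid[of "[k,l]" 6] by auto
      have km: "k \<noteq> m" "k < 6" using m 1 by auto
      show ?thesis
      proof (rule H_spin[OF D7[OF km m(1)] km(1)])
        show "2 * \<alpha> k \<in> {-1,1}" "2 * \<alpha> m \<in> {-1,1}" using spin_sign a km m by auto
        show "\<beta> k \<in> {-1,1}" "\<beta> m = 0" using 1 m by (simp_all add: Dv_at)
      qed (use km m in auto)
    next
      case (2 c)
      have F: "flipv \<alpha> \<in> E7_roots" "ip \<alpha> (flipv \<alpha>) = 0" using flipv_E7[OF a] by auto
      show ?thesis
      proof (rule goodI[OF F(1) E8_norm[OF E8_sub(1)[OF F(1)]] F(2)])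
        have "ip \<beta> (flipv \<alpha>) = c * (- \<alpha> 6) + (-c) * (- \<alpha> 7)"
          unfolding 2(2) ip_Dv[of 6 7, simplified] flipv_def pt4_def by simp
        also have "\<dots> = - 2 * c * \<alpha> 6"
        proof -
          have "\<alpha> 7 = - \<alpha> 6" using a(3) by simp
          thus ?thesis by (simp add: algebra_simps)
        qed
        finally show "ip \<beta> (flipv \<alpha>) = 1 \<or> ip \<beta> (flipv \<alpha>) = -1"
          using 2(1) spin_sign[OF a(1), of 6] by auto
      qed
    next
      case 3
      note b = 3
      show ?thesis
      proof (cases "\<exists>k<6. \<exists>m<6. \<beta> k = \<alpha> k \<and> \<beta> m = - \<alpha> m")
        case True
        then obtain k m where km: "k < 6" "m < 6" "\<beta> k = \<alpha> k" "\<beta> m = - \<alpha> m" by blast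
        have "\<alpha> k \<noteq> 0" using spin_sign[OF a(1), of k] km by auto
        hence ne: "k \<noteq> m" using km by auto
        show ?thesis
          by (rule H_agree[OF D7[OF ne km(1,2)] ne]) (use km spin_sign[OF a(1)] in auto)
      next
        case False
        have pm: "\<beta> t = \<alpha> t \<or> \<beta> t = - \<alpha> t" if "t < 8" for t
          using spin_sign[OF a(1) that] spin_sign[OF b(1) that] by auto
        have z: "\<alpha> t = 0" "\<beta> t = 0" if "8 \<le> t" for t using a(1) b(1) that unfolding spinr_def by auto
        have F: "flipv \<alpha> \<in> E7_roots" "ip \<alpha> (flipv \<alpha>) = 0" using flipv_E7[OF a] by auto
        have ipb: "ip \<beta> (flipv \<alpha>) = 1 \<or> ip \<beta> (flipv \<alpha>) = -1"
        proof (cases "\<forall>k<6. \<beta> k = \<alpha> k")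
          case True
          have "\<beta> 6 \<noteq> \<alpha> 6"
          proof
            assume "\<beta> 6 = \<alpha> 6"
            hence "\<beta> 7 = \<alpha> 7" using a(3) b(3) by simp
            have "\<alpha> = \<beta>"
            proof
              fix t show "\<alpha> t = \<beta> t"
                using True \<open>\<beta> 6 = \<alpha> 6\<close> \<open>\<beta> 7 = \<alpha> 7\<close> z
                by (cases "t < 6"; cases "t = 6"; cases "t = 7") auto
            qed
            thus False using indep_ne(1)[OF I] by simp
          qed
          hence b67: "\<beta> 6 = - \<alpha> 6" "\<beta> 7 = - \<alpha> 7" using pm[of 6] a(3) b(3) by auto
          have "ip \<beta> (flipv \<alpha>) = (\<Sum>t<8. pt4 0 1 6 7 (-1/4) (-1/4) (1/4) (1/4) (1/4) t)"
            unfolding ip_def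
          proof (rule sum.cong)
            fix t assume t: "t \<in> {..<8::nat}"
            have sq: "\<alpha> t * \<alpha> t = 1/4" using sq4[OF a(1)] t by auto
            show "\<beta> t * flipv \<alpha> t = pt4 0 1 6 7 (-1/4) (-1/4) (1/4) (1/4) (1/4) t"
              using t True b67 sq unfolding flipv_def pt4_def by (auto simp: algebra_simps)
          qed simp
          also have "\<dots> = 1" using sum_pt4[OF flip_dis] by simp
          finally show ?thesis by simp
        next
          case F2: False
          have allneg: "\<forall>k<6. \<beta> k = - \<alpha> k"
          proof (intro allI impI)
            fix k :: nat assume k: "k < 6"
            obtain m where m: "m < 6" "\<beta> m \<noteq> \<alpha> m" using F2 by auto
            show "\<beta> k = - \<alpha> k"
            proof (rule ccontr)
              assume "\<beta> k \<noteq> - \<alpha> k"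
              hence "\<beta> k = \<alpha> k" using pm[of k] k by auto
              moreover have "\<beta> m = - \<alpha> m" using pm[of m] m by auto
              ultimately show False using False k m by blast
            qed
          qed
          have "\<beta> 6 \<noteq> - \<alpha> 6"
          proof
            assume "\<beta> 6 = - \<alpha> 6"
            hence "\<beta> 7 = - \<alpha> 7" using a(3) b(3) by simp
            have "\<alpha> = (\<lambda>t. - \<beta> t)"
            proof
              fix t show "\<alpha> t = - \<beta> t"
                using allneg \<open>\<beta> 6 = - \<alpha> 6\<close> \<open>\<beta> 7 = - \<alpha> 7\<close> z
                by (cases "t < 6"; cases "t = 6"; cases "t = 7") auto
            qed
            thus False using indep_ne(2)[OF I] by simp
          qed
          hence b67: "\<beta> 6 = \<alpha> 6" "\<beta> 7 = \<alpha> 7" using pm[of 6] a(3) b(3) by auto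
          have "ip \<beta> (flipv \<alpha>) = (\<Sum>t<8. pt4 0 1 6 7 (1/4) (1/4) (-1/4) (-1/4) (-1/4) t)"
            unfolding ip_def
          proof (rule sum.cong)
            fix t assume t: "t \<in> {..<8::nat}"
            have sq: "\<alpha> t * \<alpha> t = 1/4" using sq4[OF a(1)] t by auto
            show "\<beta> t * flipv \<alpha> t = pt4 0 1 6 7 (1/4) (1/4) (-1/4) (-1/4) (-1/4) t"
              using t allneg b67 sq unfolding flipv_def pt4_def by (auto simp: algebra_simps)
          qed simp
          also have "\<dots> = -1" using sum_pt4[OF flip_dis] by simp
          finally show ?thesis by simp
        qed
        show ?thesis by (rule goodI[OF F(1) E8_norm[OF E8_sub(1)[OF F(1)]] F(2) ipb])
      qed
    qed
  qed
qed



lemma E6_cases: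
  assumes "v \<in> E6_roots"
  obtains i j a b where "i < j" "j < 5" "a \<in> {-1,1}" "b \<in> {-1,1}" "v = Dv i j a b"
  | "spinr v" "(\<Prod>k<8. 2 * v k) = 1" "v 6 + v 7 = 0" "v 5 + v 7 = 0"
proof -
  have v7: "v \<in> E7_roots" and c: "v 5 + v 7 = 0" using assms unfolding E6_iff E7_iff by auto
  show ?thesis
  using v7 proof (cases rule: E7_cases)
    case (1 i j a b)
    have "j \<noteq> 5"
    proof
      assume "j = 5"
      hence "v 5 = b" "v 7 = 0" using 1 by (auto simp: Dv_at)
      thus False using c 1(4) by auto
    qed
    hence "j < 5" using 1 by auto
    thus ?thesis using that 1 by blast
  next
    case (2 a)
    hence "v 5 = 0" "v 7 = -a" by (auto simp: Dv_at)
    thus ?thesis using c 2(1) by auto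
  next
    case 3 thus ?thesis using that c by blast
  qed
qed

lemma E6_D: "k \<noteq> m \<Longrightarrow> k < 5 \<Longrightarrow> m < 5 \<Longrightarrow> x \<in> {-1,1} \<Longrightarrow> y \<in> {-1,1} \<Longrightarrow> Dv k m x y \<in> E6_roots"
  unfolding E6_iff using E8_D by (auto simp: Dv_at)

lemma E6_good:
  assumes A: "\<alpha> \<in> E6_roots" and B: "\<beta> \<in> E6_roots" and I: "lin_indep2 \<alpha> \<beta>"
  shows "good E6_roots \<alpha> \<beta>"
proof -
  have D6: "\<And>x y. x \<in> {-1,1} \<Longrightarrow> y \<in> {-1,1} \<Longrightarrow> Dv k m x y \<in> E6_roots" if "k \<noteq> m" "k < 5" "m < 5" for k m
    using E6_D that by blast
  show ?thesis
  using A proof (cases rule: E6_cases)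
    case (1 i j a b)
    note a = 1
    show ?thesis
    using B proof (cases rule: E6_cases)
      case (1 k l c d)
      note b = 1
      show ?thesis
      proof (cases "k \<notin> {i,j}")
        case True
        obtain m where m: "m < 5" "m \<notin> set [i,j,k,l]" using avoid[of "[i,j,k,l]" 5] by auto
        have km: "k \<noteq> m" "k < 5" using m b by auto
        show ?thesis
        proof (rule H_free[OF D6[OF km m(1)] km(1)])
          show "\<alpha> k = 0" "\<alpha> m = 0" using a True m by (simp_all add: Dv_at)
          show "\<beta> k \<in> {-1,1}" "\<beta> m = 0" using b m by (simp_all add: Dv_at)
        qed (use km m in auto)
      next
        case F1: False
        show ?thesis
        proof (cases "l \<notin> {i,j}")
          case True
          obtain m where m: "m < 5" "m \<notin> set [i,j,k,l]" using avoid[of "[i,j,k,l]" 5] by auto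
          have km: "l \<noteq> m" "l < 5" using m b by auto
          show ?thesis
          proof (rule H_free[OF D6[OF km m(1)] km(1)])
            show "\<alpha> l = 0" "\<alpha> m = 0" using a True m by (simp_all add: Dv_at)
            show "\<beta> l \<in> {-1,1}" "\<beta> m = 0" using b m by (simp_all add: Dv_at)
          qed (use km m in auto)
        next
          case False
          hence kl: "k = i" "l = j" using F1 a b by auto
          have cd: "(c = a \<and> d = -b) \<or> (c = -a \<and> d = b)"
            by (rule same_supp) (use I a b kl in simp_all)
          have ij: "i < 8" "j < 8" using a by auto
          obtain \<gamma> where g: "\<gamma> \<in> E8_roots" "\<gamma> i = a/2" "\<gamma> j = -b/2" "\<gamma> 6 = 1/2" "\<gamma> 7 = -1/2"
            "\<gamma> 5 = 1/2"
            using spinw[of i j a b] a by auto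
          have G: "\<gamma> \<in> E6_roots" unfolding E6_iff using g by simp
          show ?thesis
          proof (rule goodI[OF G E8_norm[OF g(1)]])
            show "ip \<alpha> \<gamma> = 0" unfolding a(5) ip_Dv[OF ij] g(2,3) using a(3,4) by auto
            show "ip \<beta> \<gamma> = 1 \<or> ip \<beta> \<gamma> = -1" unfolding b(5) kl ip_Dv[OF ij] g(2,3) using cd a(3,4) by auto
          qed
        qed
      qed
    next
      case 2
      obtain k where k: "k < 5" "k \<notin> set [i,j]" using avoid[of "[i,j]" 5] by auto
      obtain l where l: "l < 5" "l \<notin> set [i,j,k]" using avoid[of "[i,j,k]" 5] by auto
      have kl: "k \<noteq> l" using l by auto
      show ?thesis
      proof (rule H_half[OF D6[OF kl k(1) l(1)] kl])
        show "\<alpha> k = 0" "\<alpha> l = 0" using a k l by (simp_all add: Dv_at)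
        show "2 * \<beta> k \<in> {-1,1}" "2 * \<beta> l \<in> {-1,1}" using spin_sign 2 k l by auto
      qed (use k l in auto)
    qed
  next
    case 2
    note a = 2
    show ?thesis
    using B proof (cases rule: E6_cases)
      case (1 k l c d)
      obtain m where m: "m < 5" "m \<notin> set [k,l]" using avoid[of "[k,l]" 5] by auto
      have km: "k \<noteq> m" "k < 5" using m 1 by auto
      show ?thesis
      proof (rule H_spin[OF D6[OF km m(1)] km(1)])
        show "2 * \<alpha> k \<in> {-1,1}" "2 * \<alpha> m \<in> {-1,1}" using spin_sign a km m by auto
        show "\<beta> k \<in> {-1,1}" "\<beta> m = 0" using 1 m by (simp_all add: Dv_at)
      qed (use km m in auto)
    next
      case 2
      note b = 2
      show ?thesis
      proof (cases "\<exists>k<5. \<exists>m<5. \<beta> k = \<alpha> k \<and> \<beta> m = - \<alpha> m")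
        case True
        then obtain k m where km: "k < 5" "m < 5" "\<beta> k = \<alpha> k" "\<beta> m = - \<alpha> m" by blast
        have "\<alpha> k \<noteq> 0" using spin_sign[OF a(1), of k] km by auto
        hence ne: "k \<noteq> m" using km by auto
        show ?thesis
          by (rule H_agree[OF D6[OF ne km(1,2)] ne]) (use km spin_sign[OF a(1)] in auto)
      next
        case False
        have pm: "\<beta> t = \<alpha> t \<or> \<beta> t = - \<alpha> t" if "t < 8" for t
          using spin_sign[OF a(1) that] spin_sign[OF b(1) that] by auto
        have z: "\<alpha> t = 0" "\<beta> t = 0" if "8 \<le> t" for t using a(1) b(1) that unfolding spinr_def by auto
        have sq: "(2 * \<alpha> t) * (2 * \<alpha> t) = 1" if "t < 8" for t
          using sgn1 spin_sign[OF a(1) that] by blast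
        have P: "(\<Prod>t<8. (2 * \<alpha> t) * (2 * \<beta> t)) = 1"
        proof -
          have "(\<Prod>t<8. (2 * \<alpha> t) * (2 * \<beta> t)) = (\<Prod>t<8. 2 * \<alpha> t) * (\<Prod>t<8. 2 * \<beta> t)"
            by (rule prod.distrib)
          thus ?thesis unfolding a(2) b(2) by simp
        qed
        have dis: "distinct [5::nat,6,7,0]" "(5::nat) < 8" "(6::nat) < 8" "(7::nat) < 8" "(0::nat) < 8" by auto
        show ?thesis
        proof (cases "\<forall>k<5. \<beta> k = \<alpha> k")
          case True
          have "\<beta> 7 \<noteq> \<alpha> 7"
          proof
            assume h7: "\<beta> 7 = \<alpha> 7"
            hence "\<beta> 5 = \<alpha> 5" "\<beta> 6 = \<alpha> 6" using a(3,4) b(3,4) by auto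
            have "\<alpha> = \<beta>"
            proof
              fix t show "\<alpha> t = \<beta> t"
                using True \<open>\<beta> 5 = \<alpha> 5\<close> \<open>\<beta> 6 = \<alpha> 6\<close> h7 z
                by (cases "t < 5"; cases "t = 5"; cases "t = 6"; cases "t = 7") auto
            qed
            thus False using indep_ne(1)[OF I] by simp
          qed
          hence b7: "\<beta> 7 = - \<alpha> 7" using pm[of 7] by auto
          hence b56: "\<beta> 5 = - \<alpha> 5" "\<beta> 6 = - \<alpha> 6" using a(3,4) b(3,4) by auto
          have "(\<Prod>t<8. (2 * \<alpha> t) * (2 * \<beta> t)) = (\<Prod>t<8. pt4 5 6 7 0 (-1) (-1) (-1) 1 1 t)"
          proof (rule prod.cong)
            fix t assume t: "t \<in> {..<8::nat}"
            show "(2 * \<alpha> t) * (2 * \<beta> t) = pt4 5 6 7 0 (-1) (-1) (-1) 1 1 t"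
              using sq[of t] t True b7 b56 unfolding pt4_def by (auto simp: algebra_simps)
          qed simp
          also have "\<dots> = -1" using prod_pt4[OF dis] by simp
          finally show ?thesis using P by simp
        next
          case F2: False
          have allneg: "\<forall>k<5. \<beta> k = - \<alpha> k"
          proof (intro allI impI)
            fix k :: nat assume k: "k < 5"
            obtain m where m: "m < 5" "\<beta> m \<noteq> \<alpha> m" using F2 by auto
            show "\<beta> k = - \<alpha> k"
            proof (rule ccontr)
              assume "\<beta> k \<noteq> - \<alpha> k"
              hence "\<beta> k = \<alpha> k" using pm[of k] k by auto
              moreover have "\<beta> m = - \<alpha> m" using pm[of m] m by auto
              ultimately show False using False k m by blast
            qed
          qed
          have "\<beta> 7 \<noteq> - \<alpha> 7"
          proof
            assume h7: "\<beta> 7 = - \<alpha> 7"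
            hence "\<beta> 5 = - \<alpha> 5" "\<beta> 6 = - \<alpha> 6" using a(3,4) b(3,4) by auto
            have "\<alpha> = (\<lambda>t. - \<beta> t)"
            proof
              fix t show "\<alpha> t = - \<beta> t"
                using allneg \<open>\<beta> 5 = - \<alpha> 5\<close> \<open>\<beta> 6 = - \<alpha> 6\<close> h7 z
                by (cases "t < 5"; cases "t = 5"; cases "t = 6"; cases "t = 7") auto
            qed
            thus False using indep_ne(2)[OF I] by simp
          qed
          hence b7: "\<beta> 7 = \<alpha> 7" using pm[of 7] by auto
          hence b56: "\<beta> 5 = \<alpha> 5" "\<beta> 6 = \<alpha> 6" using a(3,4) b(3,4) by auto
          have "(\<Prod>t<8. (2 * \<alpha> t) * (2 * \<beta> t)) = (\<Prod>t<8. pt4 5 6 7 0 1 1 1 (-1) (-1) t)"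
          proof (rule prod.cong)
            fix t assume t: "t \<in> {..<8::nat}"
            show "(2 * \<alpha> t) * (2 * \<beta> t) = pt4 5 6 7 0 1 1 1 (-1) (-1) t"
              using sq[of t] t allneg b7 b56 unfolding pt4_def by (auto simp: algebra_simps)
          qed simp
          also have "\<dots> = -1" using prod_pt4[OF dis] by simp
          finally show ?thesis using P by simp
        qed
      qed
    qed
  qed
qed



definition Sv :: "nat \<Rightarrow> real \<Rightarrow> vec" where "Sv i a = (\<lambda>k. a * unitv i k)"

definition spin4 :: "vec \<Rightarrow> bool" where
  "spin4 v \<longleftrightarrow> (\<forall>k<4. 2 * v k \<in> {-1, 1}) \<and> (\<forall>k\<ge>4. v k = 0)"

lemma Sv_at: "Sv i a t = (if t = i then a else 0)"
  unfolding Sv_def unitv_def by simp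

lemma F4_cases:
  assumes "v \<in> F4_roots"
  obtains i a where "i < 4" "a \<in> {-1,1}" "v = Sv i a"
  | i j a b where "i < j" "j < 4" "a \<in> {-1,1}" "b \<in> {-1,1}" "v = Dv i j a b"
  | "spin4 v"
proof -
  consider "\<exists>i a. i < 4 \<and> a \<in> {-1, 1} \<and> v = Sv i a"
    | "\<exists>i j a b. i < j \<and> j < 4 \<and> a \<in> {-1, 1} \<and> b \<in> {-1, 1} \<and> v = Dv i j a b"
    | "(\<forall>k<4. v k \<in> {1/2, -1/2}) \<and> (\<forall>k\<ge>4. v k = 0)"
    using assms unfolding F4_roots_def Sv_def Dv_def by blast
  thus ?thesis
  proof cases
    case 1 thus ?thesis using that by blast
  next
    case 2 thus ?thesis using that by blast
  next
    case 3
    hence "spin4 v" unfolding spin4_def by (auto simp: half_iff)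
    thus ?thesis using that by blast
  qed
qed

lemma F4_D: "i \<noteq> j \<Longrightarrow> i < 4 \<Longrightarrow> j < 4 \<Longrightarrow> a \<in> {-1,1} \<Longrightarrow> b \<in> {-1,1} \<Longrightarrow> Dv i j a b \<in> F4_roots"
proof -
  assume h: "i \<noteq> j" "i < 4" "j < 4" "a \<in> {-1,1}" "b \<in> {-1,1}"
  show ?thesis
  proof (cases "i < j")
    case True
    hence "Dv i j a b \<in> {v. \<exists>i j a b. i < j \<and> j < 4 \<and> a \<in> {-1, 1} \<and> b \<in> {-1, 1} \<and>
           v = (\<lambda>k. a * unitv i k + b * unitv j k)}" using h unfolding Dv_def by blast
    thus ?thesis unfolding F4_roots_def by blast
  next
    case False
    hence "j < i" using h by simp
    moreover have "Dv i j a b = Dv j i b a" unfolding Dv_def by (simp add: add.commute)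
    ultimately have "Dv i j a b \<in> {v. \<exists>i j a b. i < j \<and> j < 4 \<and> a \<in> {-1, 1} \<and> b \<in> {-1, 1} \<and>
           v = (\<lambda>k. a * unitv i k + b * unitv j k)}" using h unfolding Dv_def by blast
    thus ?thesis unfolding F4_roots_def by blast
  qed
qed

lemma ip_Sv: "i < 8 \<Longrightarrow> ip w (Sv i a) = a * w i"
proof -
  assume i: "i < 8"
  have "Sv i a = Dv i i a 0" unfolding Sv_def Dv_def by simp
  thus ?thesis using ip_Dv'[OF i i] by simp
qed

lemma spin4_sign: "spin4 v \<Longrightarrow> k < 4 \<Longrightarrow> 2 * v k \<in> {-1,1}"
  unfolding spin4_def by auto

lemma spin4_agree:
  assumes "spin4 a" "spin4 b" "lin_indep2 a b"
  obtains k m where "k < 4" "m < 4" "b k = a k" "b m = - a m" "k \<noteq> m"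
proof -
  have "\<exists>k<4. b k = a k"
  proof (rule ccontr)
    assume "\<not> ?thesis"
    hence h: "\<forall>k<4. b k = - a k" using assms(1,2) unfolding spin4_def by force
    have "a = (\<lambda>k. - b k)"
    proof
      fix t show "a t = - b t"
      proof (cases "t < 4")
        case True thus ?thesis using h by simp
      next
        case False thus ?thesis using assms(1,2) unfolding spin4_def by simp
      qed
    qed
    thus False using indep_ne(2)[OF assms(3)] by simp
  qed
  then obtain k where k: "k < 4" "b k = a k" by blast
  have "\<exists>m<4. b m = - a m"
  proof (rule ccontr)
    assume "\<not> ?thesis"
    hence h: "\<forall>k<4. b k = a k" using assms(1,2) unfolding spin4_def by force
    have "a = b"
    proof
      fix t show "a t = b t"
      proof (cases "t < 4")
        case True thus ?thesis using h by simp
      next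
        case False thus ?thesis using assms(1,2) unfolding spin4_def by simp
      qed
    qed
    thus False using indep_ne(1)[OF assms(3)] by simp
  qed
  then obtain m where m: "m < 4" "b m = - a m" by blast
  have "a k \<noteq> 0" using spin4_sign[OF assms(1) k(1)] by auto
  hence "k \<noteq> m" using k m by auto
  thus ?thesis using that k m by blast
qed

lemma F4_good:
  assumes A: "\<alpha> \<in> F4_roots" and B: "\<beta> \<in> F4_roots" and I: "lin_indep2 \<alpha> \<beta>"
  shows "good F4_roots \<alpha> \<beta> \<or> (ip \<alpha> \<beta> = 0 \<and> ip \<alpha> \<alpha> = 2 \<and> ip \<beta> \<beta> = 2)"
proof -
  have D4: "\<And>x y. x \<in> {-1,1} \<Longrightarrow> y \<in> {-1,1} \<Longrightarrow> Dv k m x y \<in> F4_roots" if "k \<noteq> m" "k < 4" "m < 4" for k m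
    using F4_D that by blast
  have l8: "k < 8" if "k < 4" for k :: nat using that by simp
  show ?thesis
  using A proof (cases rule: F4_cases)
    case (1 i a)
    note a = 1
    show ?thesis
    using B proof (cases rule: F4_cases)
      case (1 k c)
      have "k \<noteq> i"
      proof
        assume "k = i"
        moreover have "c = a \<or> c = -a" using 1 a by auto
        ultimately show False using indep_ne[OF I] unfolding a(3) 1(3) Sv_def by auto
      qed
      obtain m where m: "m < 4" "m \<notin> set [i,k]" using avoid[of "[i,k]" 4] by auto
      have km: "k \<noteq> m" "k < 4" using m 1 by auto
      have "good F4_roots \<alpha> \<beta>"
      proof (rule H_free[OF D4[OF km m(1)] km(1) l8[OF km(2)] l8[OF m(1)]])
        show "\<alpha> k = 0" "\<alpha> m = 0" using a \<open>k \<noteq> i\<close> m by (simp_all add: Sv_at)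
        show "\<beta> k \<in> {-1,1}" "\<beta> m = 0" using 1 m by (simp_all add: Sv_at)
      qed
      thus ?thesis ..
    next
      case (2 k l c d)
      note b = 2
      obtain m where m: "m < 4" "m \<notin> set [i,k,l]" using avoid[of "[i,k,l]" 4] by auto
      have "good F4_roots \<alpha> \<beta>"
      proof (cases "k = i")
        case False
        have km: "k \<noteq> m" "k < 4" using m b by auto
        show ?thesis
        proof (rule H_free[OF D4[OF km m(1)] km(1) l8[OF km(2)] l8[OF m(1)]])
          show "\<alpha> k = 0" "\<alpha> m = 0" using a False m by (simp_all add: Sv_at)
          show "\<beta> k \<in> {-1,1}" "\<beta> m = 0" using b m by (simp_all add: Dv_at)
        qed
      next
        case True
        have km: "l \<noteq> m" "l < 4" "l \<noteq> i" using m b True by auto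
        show ?thesis
        proof (rule H_free[OF D4[OF km(1) km(2) m(1)] km(1) l8[OF km(2)] l8[OF m(1)]])
          show "\<alpha> l = 0" "\<alpha> m = 0" using a km m by (simp_all add: Sv_at)
          show "\<beta> l \<in> {-1,1}" "\<beta> m = 0" using b m by (simp_all add: Dv_at)
        qed
      qed
      thus ?thesis ..
    next
      case 3
      obtain k where k: "k < 4" "k \<notin> set [i]" using avoid[of "[i]" 4] by auto
      obtain l where l: "l < 4" "l \<notin> set [i,k]" using avoid[of "[i,k]" 4] by auto
      have kl: "k \<noteq> l" using l by auto
      have "good F4_roots \<alpha> \<beta>"
      proof (rule H_half[OF D4[OF kl k(1) l(1)] kl l8[OF k(1)] l8[OF l(1)]])
        show "\<alpha> k = 0" "\<alpha> l = 0" using a k l by (simp_all add: Sv_at)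
        show "2 * \<beta> k \<in> {-1,1}" "2 * \<beta> l \<in> {-1,1}" using spin4_sign 3 k l by auto
      qed
      thus ?thesis ..
    qed
  next
    case (2 i j a b)
    note a = 2
    have ij8: "i < 8" "j < 8" using a by auto
    show ?thesis
    using B proof (cases rule: F4_cases)
      case (1 k c)
      have "good F4_roots \<alpha> \<beta>"
      proof (cases "k \<in> {i,j}")
        case False
        obtain m where m: "m < 4" "m \<notin> set [i,j,k]" using avoid[of "[i,j,k]" 4] by auto
        have km: "k \<noteq> m" "k < 4" using m 1 by auto
        show ?thesis
        proof (rule H_free[OF D4[OF km m(1)] km(1) l8[OF km(2)] l8[OF m(1)]])
          show "\<alpha> k = 0" "\<alpha> m = 0" using a False m by (simp_all add: Dv_at)
          show "\<beta> k \<in> {-1,1}" "\<beta> m = 0" using 1 m by (simp_all add: Sv_at)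
        qed
      next
        case True
        show ?thesis
        proof (cases "k = i")
          case True
          have km: "i \<noteq> j" "i < 4" "j < 4" using a by auto
          show ?thesis
          proof (rule H_F4[OF D4[OF km] km(1) l8[OF km(2)] l8[OF km(3)]])
            show "\<alpha> i \<in> {-1,1}" "\<alpha> j \<in> {-1,1}" using a by (simp_all add: Dv_at)
            show "\<beta> i \<in> {-1,1}" "\<beta> j = 0" using 1 True km by (simp_all add: Sv_at)
          qed
        next
          case False
          hence kj: "k = j" using True by auto
          have km: "j \<noteq> i" "j < 4" "i < 4" using a by auto
          show ?thesis
          proof (rule H_F4[OF D4[OF km] km(1) l8[OF km(2)] l8[OF km(3)]])
            show "\<alpha> j \<in> {-1,1}" "\<alpha> i \<in> {-1,1}" using a by (simp_all add: Dv_at)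
            show "\<beta> j \<in> {-1,1}" "\<beta> i = 0" using 1 kj km by (simp_all add: Sv_at)
          qed
        qed
      qed
      thus ?thesis ..
    next
      case (2 k l c d)
      note b = 2
      have kl8: "k < 8" "l < 8" using b by auto
      show ?thesis
      proof (cases "k \<notin> {i,j} \<and> l \<in> {i,j}")
        case True
        obtain m where m: "m < 4" "m \<notin> set [i,j,k]" using avoid[of "[i,j,k]" 4] by auto
        have km: "k \<noteq> m" "k < 4" using m b by auto
        have "m \<noteq> l" using True m by auto
        have "good F4_roots \<alpha> \<beta>"
        proof (rule H_free[OF D4[OF km m(1)] km(1) l8[OF km(2)] l8[OF m(1)]])
          show "\<alpha> k = 0" "\<alpha> m = 0" using a True m by (simp_all add: Dv_at)
          show "\<beta> k \<in> {-1,1}" "\<beta> m = 0" using b m \<open>m \<noteq> l\<close> by (simp_all add: Dv_at)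
        qed
        thus ?thesis ..
      next
        case F1: False
        show ?thesis
        proof (cases "l \<notin> {i,j} \<and> k \<in> {i,j}")
          case True
          obtain m where m: "m < 4" "m \<notin> set [i,j,l]" using avoid[of "[i,j,l]" 4] by auto
          have km: "l \<noteq> m" "l < 4" using m b by auto
          have "m \<noteq> k" using True m by auto
          have "good F4_roots \<alpha> \<beta>"
          proof (rule H_free[OF D4[OF km m(1)] km(1) l8[OF km(2)] l8[OF m(1)]])
            show "\<alpha> l = 0" "\<alpha> m = 0" using a True m by (simp_all add: Dv_at)
            show "\<beta> l \<in> {-1,1}" "\<beta> m = 0" using b m \<open>m \<noteq> k\<close> by (simp_all add: Dv_at)
          qed
          thus ?thesis ..
        next
          case F2: False
          have nA: "ip \<alpha> \<alpha> = 2" unfolding a(5) ip_Dv[OF ij8] using a by (auto simp: Dv_at)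
          have nB: "ip \<beta> \<beta> = 2" unfolding b(5) ip_Dv[OF kl8] using b by (auto simp: Dv_at)
          have "ip \<alpha> \<beta> = 0"
          proof (cases "k \<in> {i,j}")
            case True
            hence "l \<in> {i,j}" using F2 by auto
            hence kl: "k = i" "l = j" using True a b by auto
            have cd: "(c = a \<and> d = -b) \<or> (c = -a \<and> d = b)"
              by (rule same_supp) (use I a b kl in simp_all)
            show ?thesis unfolding a(5) ip_Dv[OF ij8] b(5) kl using cd a(1,3,4) by (auto simp: Dv_at)
          next
            case False
            hence "l \<notin> {i,j}" using F1 by auto
            thus ?thesis unfolding a(5) ip_Dv[OF ij8] using False b by (auto simp: Dv_at)
          qed
          thus ?thesis using nA nB by blast
        qed
      qed
    next
      case 3
      obtain k where k: "k < 4" "k \<notin> set [i,j]" using avoid[of "[i,j]" 4] by auto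
      obtain l where l: "l < 4" "l \<notin> set [i,j,k]" using avoid[of "[i,j,k]" 4] by auto
      have kl: "k \<noteq> l" using l by auto
      have "good F4_roots \<alpha> \<beta>"
      proof (rule H_half[OF D4[OF kl k(1) l(1)] kl l8[OF k(1)] l8[OF l(1)]])
        show "\<alpha> k = 0" "\<alpha> l = 0" using a k l by (simp_all add: Dv_at)
        show "2 * \<beta> k \<in> {-1,1}" "2 * \<beta> l \<in> {-1,1}" using spin4_sign 3 k l by auto
      qed
      thus ?thesis ..
    qed
  next
    case 3
    note a = 3
    show ?thesis
    using B proof (cases rule: F4_cases)
      case (1 k c)
      obtain m where m: "m < 4" "m \<notin> set [k]" using avoid[of "[k]" 4] by auto
      have km: "k \<noteq> m" "k < 4" using m 1 by auto
      have "good F4_roots \<alpha> \<beta>"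
      proof (rule H_spin[OF D4[OF km m(1)] km(1) l8[OF km(2)] l8[OF m(1)]])
        show "2 * \<alpha> k \<in> {-1,1}" "2 * \<alpha> m \<in> {-1,1}" using spin4_sign a km m by auto
        show "\<beta> k \<in> {-1,1}" "\<beta> m = 0" using 1 m by (simp_all add: Sv_at)
      qed
      thus ?thesis ..
    next
      case (2 k l c d)
      obtain m where m: "m < 4" "m \<notin> set [k,l]" using avoid[of "[k,l]" 4] by auto
      have km: "k \<noteq> m" "k < 4" using m 2 by auto
      have "good F4_roots \<alpha> \<beta>"
      proof (rule H_spin[OF D4[OF km m(1)] km(1) l8[OF km(2)] l8[OF m(1)]])
        show "2 * \<alpha> k \<in> {-1,1}" "2 * \<alpha> m \<in> {-1,1}" using spin4_sign a km m by auto
        show "\<beta> k \<in> {-1,1}" "\<beta> m = 0" using 2 m by (simp_all add: Dv_at)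
      qed
      thus ?thesis ..
    next
      case 3
      obtain k m where km: "k < 4" "m < 4" "\<beta> k = \<alpha> k" "\<beta> m = - \<alpha> m" "k \<noteq> m"
        using spin4_agree[OF a 3 I] by blast
      have "good F4_roots \<alpha> \<beta>"
        by (rule H_agree[OF D4[OF km(5) km(1,2)] km(5) l8[OF km(1)] l8[OF km(2)]
              spin4_sign[OF a km(1)] spin4_sign[OF a km(2)] km(3,4)])
      thus ?thesis ..
    qed
  qed
qed


theorem proposition6p4:
  fixes \<Phi> \<Lambda> :: "vec set" and \<alpha> \<beta> :: vec
  assumes "\<Phi> \<in> {E6_roots, E7_roots, E8_roots, F4_roots}"
    and "is_group_lattice \<Phi> \<Lambda>"
    and "\<exists>u::'r::idom. u dvd 1 \<and> u \<noteq> 1"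
    and "\<alpha> \<in> \<Phi>" and "\<beta> \<in> \<Phi>" and "lin_indep2 \<alpha> \<beta>"
    and "\<not> ({u::'r. u dvd 1} = {1, -1} \<and> \<Phi> = F4_roots \<and>
            ip \<alpha> \<beta> = 0 \<and> ip \<alpha> \<alpha> = 2 \<and> ip \<beta> \<beta> = 2)"
  shows "\<exists>s :: vec \<Rightarrow> 'r. torus_witness \<Lambda> s \<alpha> \<beta>"
proof -
  have g: "good \<Phi> \<alpha> \<beta> \<or> (\<Phi> = F4_roots \<and> ip \<alpha> \<beta> = 0 \<and> ip \<alpha> \<alpha> = 2 \<and> ip \<beta> \<beta> = 2)"
  proof -
    consider "\<Phi> = E6_roots" | "\<Phi> = E7_roots" | "\<Phi> = E8_roots" | "\<Phi> = F4_roots" using assms(1) by blast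
    thus ?thesis
    proof cases
      case 1 thus ?thesis using E6_good assms(4-6) by blast
    next
      case 2 thus ?thesis using E7_good assms(4-6) by blast
    next
      case 3 thus ?thesis using E8_good assms(4-6) by blast
    next
      case 4 thus ?thesis using F4_good assms(4-6) by blast
    qed
  qed
  thus ?thesis
  proof
    assume "good \<Phi> \<alpha> \<beta>"
    then obtain \<gamma> where "\<gamma> \<in> \<Phi>" "ip \<gamma> \<gamma> = 2" "ip \<alpha> \<gamma> = 0" "ip \<beta> \<gamma> = 1 \<or> ip \<beta> \<gamma> = -1"
      unfolding good_def by blast
    thus ?thesis using final[OF assms(2,3)] by blast
  next
    assume h: "\<Phi> = F4_roots \<and> ip \<alpha> \<beta> = 0 \<and> ip \<alpha> \<alpha> = 2 \<and> ip \<beta> \<beta> = 2"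
    hence "{u::'r. u dvd 1} \<noteq> {1, -1}" using assms(7) by blast
    thus ?thesis using final[OF assms(2,3) assms(5), of \<alpha> \<beta>] h by auto
  qed
qed

end
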